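(* Assume that the pair $(H,A)$ satisfies Condition G. Then for every $\theta\in B^{\mathbb C}_{R'}(0)$, $$\sigma(H_\theta)\subset\{x+\mathrm iy:\ x,y\in\mathbb R,\ |y|\le4C|\theta|(|x|+1)\}.$$
   Context: $\mathcal H$ is a complex separable Hilbert space, $H$ and $A$ are self-adjoint on $\mathcal H$, and $U(t)=e^{\mathrm itA}$. Condition G: - (G1) $U(t)D(H)\subset D(H)$ for all real $t$, and $\sup_{|t|\le1}\|HU(t)\psi\|<\infty$ for every $\psi\in D(H)$. - (G2) The form $(\psi,\varphi)\mapsto\langle H\psi,A\varphi\rangle-\langle A\psi,H\varphi\rangle$ on $D(H)\cap D(A)$ is continuous with respect to $\|\psi\|_H+\|\varphi\|_H$, where $\|\psi\|_H=\|H\psi\|+\|\psi\|$. - (G3) There is $R>0$ such that for every $\psi\in D(H)$ the map $t\mapsto H_t\psi:=U(t)HU(-t)\psi$ extends analytically to the strip $\{|\operatorname{Im}\theta|<R\}$. This defines operators $H_\theta$ with domain $D(H)$. - (G4) $M:=\sup_{|\theta|<R}\|H_\theta(H+\mathrm i)^{-1}\|<\infty$. Put $C:=\max\{1,M\}/R$ and $R':=1/(3C)$, and let $B^{\mathbb C}_{R'}(0)=\{|\theta|<R'\}$. *)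

theory Defs
  imports "HOL-Analysis.Analysis"
begin

class chilbert_space = banach +
  fixes scaleC :: "complex \<Rightarrow> 'a \<Rightarrow> 'a"
    and cinner :: "'a \<Rightarrow> 'a \<Rightarrow> complex"
  assumes scaleC_of_real: "scaleC (complex_of_real r) x = r *\<^sub>R x"
    and scaleC_add_left: "scaleC (a + b) x = scaleC a x + scaleC b x"
    and scaleC_add_right: "scaleC a (x + y) = scaleC a x + scaleC a y"
    and scaleC_scaleC: "scaleC a (scaleC b x) = scaleC (a * b) x"
    and norm_scaleC: "norm (scaleC a x) = cmod a * norm x"
    and cinner_commute: "cinner x y = cnj (cinner y x)"
    and cinner_add_right: "cinner x (y + z) = cinner x y + cinner x z"
    and cinner_scaleC_right: "cinner x (scaleC a y) = a * cinner x y"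
    and cinner_self_norm: "cinner x x = complex_of_real ((norm x)\<^sup>2)"

section \<open>Unbounded operators, given as (domain, map)\<close>

definition csubspace :: "'a::chilbert_space set \<Rightarrow> bool" where
  "csubspace D \<longleftrightarrow> 0 \<in> D \<and> (\<forall>x\<in>D. \<forall>y\<in>D. x + y \<in> D) \<and> (\<forall>c. \<forall>x\<in>D. scaleC c x \<in> D)"

definition clinear_op :: "'a::chilbert_space set \<Rightarrow> ('a \<Rightarrow> 'a) \<Rightarrow> bool" where
  "clinear_op D T \<longleftrightarrow> csubspace D \<and> (\<forall>x\<in>D. \<forall>y\<in>D. T (x + y) = T x + T y)
     \<and> (\<forall>c. \<forall>x\<in>D. T (scaleC c x) = scaleC c (T x))"

definition adj_dom :: "'a::chilbert_space set \<Rightarrow> ('a \<Rightarrow> 'a) \<Rightarrow> 'a set" where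
  "adj_dom D T = {\<phi>. \<exists>\<eta>. \<forall>\<psi>\<in>D. cinner \<phi> (T \<psi>) = cinner \<eta> \<psi>}"

definition self_adjoint_op :: "'a::chilbert_space set \<Rightarrow> ('a \<Rightarrow> 'a) \<Rightarrow> bool" where
  "self_adjoint_op D T \<longleftrightarrow> clinear_op D T \<and> closure D = UNIV \<and> adj_dom D T = D
     \<and> (\<forall>\<phi>\<in>D. \<forall>\<psi>\<in>D. cinner \<phi> (T \<psi>) = cinner (T \<phi>) \<psi>)"

text \<open>U(t) = e^{itA}: U is the strongly continuous one-parameter unitary group whose
  (Stone) generator is iA, i.e. D(A) is exactly the set of vectors where
  t \<mapsto> U(t)\<psi> is differentiable at 0, and the derivative there is i A\<psi>.\<close>
definition unitary_group_of :: "(real \<Rightarrow> 'a::chilbert_space \<Rightarrow> 'a) \<Rightarrow> 'a set \<Rightarrow> ('a \<Rightarrow> 'a) \<Rightarrow> bool" where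
  "unitary_group_of U D A \<longleftrightarrow>
     (\<forall>t. clinear_op UNIV (U t) \<and> (\<forall>x. norm (U t x) = norm x) \<and> surj (U t))
     \<and> U 0 = id \<and> (\<forall>s t. U (s + t) = U s \<circ> U t)
     \<and> (\<forall>x. continuous_on UNIV (\<lambda>t. U t x))
     \<and> D = {x. \<exists>v. ((\<lambda>t. U t x) has_vector_derivative v) (at 0)}
     \<and> (\<forall>x\<in>D. ((\<lambda>t. U t x) has_vector_derivative scaleC \<i> (A x)) (at 0))"

definition cresolvent :: "'a::chilbert_space set \<Rightarrow> ('a \<Rightarrow> 'a) \<Rightarrow> complex \<Rightarrow> 'a \<Rightarrow> 'a" where
  "cresolvent D T z \<phi> = (THE \<psi>. \<psi> \<in> D \<and> T \<psi> - scaleC z \<psi> = \<phi>)"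

definition cspectrum :: "'a::chilbert_space set \<Rightarrow> ('a \<Rightarrow> 'a) \<Rightarrow> complex set" where
  "cspectrum D T = {z. \<not> (bij_betw (\<lambda>x. T x - scaleC z x) D UNIV
       \<and> (\<exists>K. \<forall>x\<in>D. norm x \<le> K * norm (T x - scaleC z x)))}"

end

theory Submission
  imports Defs "HOL-Complex_Analysis.Complex_Analysis"
begin

lemma scaleC_one[simp]: "scaleC 1 x = x"
  using scaleC_of_real[of 1 x] by simp

lemma scaleC_zero_left[simp]: "scaleC 0 x = 0"
  using scaleC_of_real[of 0 x] by simp

lemma scaleC_minus1: "scaleC (-1) x = - x"
  using scaleC_of_real[of "-1" x] by simp

lemma scaleC_zero_right[simp]: "scaleC a 0 = 0"
  using norm_scaleC[of a 0] by simp

lemma scaleC_minus_right: "scaleC a (- x) = - scaleC a x"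
proof -
  have "scaleC a (- x) = scaleC a (scaleC (-1) x)" by (simp add: scaleC_minus1)
  also have "\<dots> = scaleC (-1) (scaleC a x)" by (simp add: scaleC_scaleC mult.commute)
  finally show ?thesis by (simp add: scaleC_minus1)
qed

lemma scaleC_diff_right: "scaleC a (x - y) = scaleC a x - scaleC a y"
  using scaleC_add_right[of a x "- y"] by (simp add: scaleC_minus_right)

lemma scaleC_minus_left: "scaleC (- a) x = - scaleC a x"
proof -
  have "scaleC (- a) x = scaleC (-1) (scaleC a x)" by (simp add: scaleC_scaleC)
  then show ?thesis by (simp add: scaleC_minus1)
qed

lemma scaleC_diff_left: "scaleC (a - b) x = scaleC a x - scaleC b x"
  using scaleC_add_left[of a "- b" x] by (simp add: scaleC_minus_left)

lemma scaleC_scaleR: "scaleC a (r *\<^sub>R x) = r *\<^sub>R scaleC a x"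
proof -
  have "scaleC a (r *\<^sub>R x) = scaleC a (scaleC (complex_of_real r) x)" by (simp add: scaleC_of_real)
  also have "\<dots> = scaleC (complex_of_real r) (scaleC a x)" by (simp add: scaleC_scaleC mult.commute)
  finally show ?thesis by (simp add: scaleC_of_real)
qed

lemma cinner_add_left: "cinner (x + y) z = cinner x z + cinner y z"
  by (metis cinner_commute cinner_add_right complex_cnj_add)

lemma cinner_scaleC_left: "cinner (scaleC a x) y = cnj a * cinner x y"
  by (metis cinner_commute cinner_scaleC_right complex_cnj_mult complex_cnj_cnj)

lemma cinner_zero_right[simp]: "cinner x 0 = 0"
  using cinner_add_right[of x 0 0] by simp

lemma cinner_zero_left[simp]: "cinner 0 x = 0"
  using cinner_add_left[of 0 0 x] by simp

lemma cinner_minus_right: "cinner x (- y) = - cinner x y"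
  using cinner_add_right[of x y "- y"] by (simp add: eq_neg_iff_add_eq_0 add.commute)

lemma cinner_minus_left: "cinner (- x) y = - cinner x y"
  using cinner_add_left[of x "- x" y] by (simp add: eq_neg_iff_add_eq_0 add.commute)

lemma cinner_diff_right: "cinner x (y - z) = cinner x y - cinner x z"
  using cinner_add_right[of x y "- z"] by (simp add: cinner_minus_right)

lemma cinner_diff_left: "cinner (x - y) z = cinner x z - cinner y z"
  using cinner_add_left[of x "- y" z] by (simp add: cinner_minus_left)

lemma cinner_scaleR_right: "cinner x (r *\<^sub>R y) = complex_of_real r * cinner x y"
  by (metis cinner_scaleC_right scaleC_of_real)

lemma norm_sq_cinner: "(norm x)\<^sup>2 = Re (cinner x x)"
  by (simp add: cinner_self_norm)

lemma norm_diff_sq: "(norm (x - y))\<^sup>2 = (norm x)\<^sup>2 + (norm y)\<^sup>2 - 2 * Re (cinner x y)"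
proof -
  have "cinner (x - y) (x - y) = cinner x x - cinner x y - cinner y x + cinner y y"
    by (simp add: cinner_diff_left cinner_diff_right)
  moreover have "Re (cinner y x) = Re (cinner x y)" by (subst cinner_commute) simp
  ultimately show ?thesis by (simp add: norm_sq_cinner)
qed

lemma norm_add_sq: "(norm (x + y))\<^sup>2 = (norm x)\<^sup>2 + (norm y)\<^sup>2 + 2 * Re (cinner x y)"
  using norm_diff_sq[of x "- y"] by (simp add: cinner_minus_right)

lemma cauchy_schwarz: "cmod (cinner x y) \<le> norm x * norm y"
proof (cases "y = 0")
  case True then show ?thesis by simp
next
  case False
  then have ny: "norm y > 0" by simp
  define c where "c = cinner y x / complex_of_real ((norm y)\<^sup>2)"
  have "0 \<le> (norm (x - scaleC c y))\<^sup>2" by simp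
  also have "\<dots> = (norm x)\<^sup>2 + (cmod c)\<^sup>2 * (norm y)\<^sup>2 - 2 * Re (c * cinner x y)"
    by (simp add: norm_diff_sq norm_scaleC cinner_scaleC_right power_mult_distrib)
  also have "c * cinner x y = complex_of_real ((cmod (cinner x y))\<^sup>2 / (norm y)\<^sup>2)"
  proof -
    have "cinner y x = cnj (cinner x y)" by (rule cinner_commute)
    then have "c * cinner x y = cnj (cinner x y) * cinner x y / complex_of_real ((norm y)\<^sup>2)"
      by (simp add: c_def)
    also have "cnj (cinner x y) * cinner x y = complex_of_real ((cmod (cinner x y))\<^sup>2)"
      by (metis complex_norm_square mult.commute of_real_power)
    finally show ?thesis by simp
  qed
  also have "cmod c = cmod (cinner x y) / (norm y)\<^sup>2"
    by (simp add: c_def norm_divide cinner_commute[of y x] norm_power)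
  finally have "0 \<le> (norm x)\<^sup>2 + (cmod (cinner x y) / (norm y)\<^sup>2)\<^sup>2 * (norm y)\<^sup>2
      - 2 * ((cmod (cinner x y))\<^sup>2 / (norm y)\<^sup>2)" by simp
  then have "0 \<le> (norm x)\<^sup>2 - (cmod (cinner x y))\<^sup>2 / (norm y)\<^sup>2"
    using ny by (simp add: power_divide field_simps power2_eq_square)
  then have "(cmod (cinner x y))\<^sup>2 \<le> (norm x * norm y)\<^sup>2"
    using ny by (simp add: field_simps power_mult_distrib)
  then show ?thesis
    by (meson mult_nonneg_nonneg norm_ge_zero power2_le_imp_le)
qed

lemma bounded_linear_cinner_right: "bounded_linear (cinner w)"
proof
  show "cinner w (x + y) = cinner w x + cinner w y" for x y by (rule cinner_add_right)
  show "cinner w (r *\<^sub>R x) = r *\<^sub>R cinner w x" for r x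
    by (simp add: cinner_scaleR_right scaleR_conv_of_real)
  show "\<exists>K. \<forall>x. norm (cinner w x) \<le> norm x * K"
    by (rule exI[of _ "norm w"]) (metis cauchy_schwarz mult.commute norm_complex_def)
qed

lemma bounded_linear_scaleC: "bounded_linear (scaleC a)"
proof
  show "scaleC a (x + y) = scaleC a x + scaleC a y" for x y by (rule scaleC_add_right)
  show "scaleC a (r *\<^sub>R x) = r *\<^sub>R scaleC a x" for r x by (rule scaleC_scaleR)
  show "\<exists>K. \<forall>x. norm (scaleC a x) \<le> norm x * K"
    by (rule exI[of _ "cmod a"]) (simp add: norm_scaleC mult.commute)
qed

lemma cinner_self_eq_0: "cinner x x = 0 \<longleftrightarrow> x = 0"
  by (simp add: cinner_self_norm)

lemma parallelogram:
  fixes a b :: "'a::chilbert_space"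
  shows "(norm (a + b))\<^sup>2 + (norm (a - b))\<^sup>2 = 2 * (norm a)\<^sup>2 + 2 * (norm b)\<^sup>2"
  by (simp add: norm_add_sq norm_diff_sq)

lemma projection:
  fixes V :: "'a::chilbert_space set" and f :: 'a
  assumes clV: "closed V" and V0: "0 \<in> V" and Vadd: "\<forall>x\<in>V. \<forall>y\<in>V. x + y \<in> V"
    and Vsc: "\<forall>c. \<forall>x\<in>V. scaleC c x \<in> V"
  shows "\<exists>p\<in>V. \<forall>v\<in>V. cinner v (f - p) = 0"
proof -
  define D where "D = Inf ((\<lambda>v. (norm (f - v))\<^sup>2) ` V)"
  have bdd: "bdd_below ((\<lambda>v. (norm (f - v))\<^sup>2) ` V)"
    by (rule bdd_belowI[of _ 0]) auto
  have Dle: "D \<le> (norm (f - v))\<^sup>2" if "v \<in> V" for v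
    unfolding D_def using bdd that by (simp add: cInf_lower)
  have "\<exists>v\<in>V. (norm (f - v))\<^sup>2 < D + 1 / (real n + 1)" for n
  proof -
    have "Inf ((\<lambda>v. (norm (f - v))\<^sup>2) ` V) < D + 1 / (real n + 1)"
      unfolding D_def by simp
    then show ?thesis using V0 by (subst (asm) cInf_less_iff) (auto simp: bdd)
  qed
  then obtain v where vV: "\<And>n. v n \<in> V" and vD: "\<And>n. (norm (f - v n))\<^sup>2 < D + 1 / (real n + 1)"
    by metis
  have Vscr: "r *\<^sub>R x \<in> V" if "x \<in> V" for r x
    using Vsc that by (metis scaleC_of_real)
  have Vminus: "x - y \<in> V" if "x \<in> V" "y \<in> V" for x y
  proof -
    have "(-1::real) *\<^sub>R y \<in> V" using Vscr that by blast
    then show ?thesis using Vadd that by (metis diff_conv_add_uminus scaleR_minus1_left)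
  qed
  have dist_vv: "(norm (v n - v m))\<^sup>2 \<le> 2 / (real n + 1) + 2 / (real m + 1)" for n m
  proof -
    define a where "a = f - v n"
    define b where "b = f - v m"
    define mid where "mid = (1/2::real) *\<^sub>R (v n + v m)"
    have midV: "mid \<in> V" unfolding mid_def using vV Vadd Vscr by blast
    have "a + b = 2 *\<^sub>R (f - mid)" unfolding a_def b_def mid_def
      by (simp add: algebra_simps scaleR_2)
    then have "(norm (a + b))\<^sup>2 = 4 * (norm (f - mid))\<^sup>2"
      by (simp add: power_mult_distrib)
    moreover have "D \<le> (norm (f - mid))\<^sup>2" using Dle midV by blast
    moreover have "(norm (a - b))\<^sup>2 = (norm (v n - v m))\<^sup>2"
    proof -
      have "a - b = v m - v n" unfolding a_def b_def by simp
      then show ?thesis by (simp add: norm_minus_commute)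
    qed
    ultimately show ?thesis
      using parallelogram[of a b] vD[of n] vD[of m] unfolding a_def[symmetric] b_def[symmetric] by linarith
  qed
  have "Cauchy v"
  proof (rule metric_CauchyI)
    fix e :: real assume e: "e > 0"
    obtain N :: nat where N0: "4 / e\<^sup>2 < real N"
      using reals_Archimedean2 by blast
    then have N: "4 / e\<^sup>2 < real N + 1" by linarith
    have e2: "e\<^sup>2 > 0" using e by simp
    have "4 < e\<^sup>2 * (real N + 1)" using N e2 by (simp add: pos_divide_less_eq mult.commute)
    then have "4 / (real N + 1) < e\<^sup>2" by (simp add: pos_divide_less_eq)
    show "\<exists>M. \<forall>m\<ge>M. \<forall>n\<ge>M. dist (v m) (v n) < e"
    proof (intro exI allI impI)
      fix m n assume mn: "N \<le> m" "N \<le> n"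
      have "2 / (real m + 1) \<le> 2 / (real N + 1)" "2 / (real n + 1) \<le> 2 / (real N + 1)"
        using mn by (simp_all add: frac_le)
      then have "(norm (v m - v n))\<^sup>2 < e\<^sup>2"
        using dist_vv[of m n] \<open>4 / (real N + 1) < e\<^sup>2\<close> by linarith
      then show "dist (v m) (v n) < e"
        using e by (simp add: dist_norm power_less_imp_less_base)
    qed
  qed
  then obtain p where vp: "v \<longlonglongrightarrow> p" using Cauchy_convergent_iff convergent_def by blast
  have pV: "p \<in> V" using clV vV vp closed_sequentially by blast
  have "(\<lambda>n. (norm (f - v n))\<^sup>2) \<longlonglongrightarrow> (norm (f - p))\<^sup>2"
    by (intro tendsto_intros vp)
  moreover have "(\<lambda>n. D + 1 / (real n + 1)) \<longlonglongrightarrow> D + 0"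
  proof -
    have "(\<lambda>n. 1 / real (Suc n)) \<longlonglongrightarrow> 0" by (rule LIMSEQ_Suc[OF lim_1_over_n])
    then have "(\<lambda>n. 1 / (real n + 1)) \<longlonglongrightarrow> 0" by (simp add: add.commute)
    then show ?thesis by (intro tendsto_intros)
  qed
  ultimately have pmin: "(norm (f - p))\<^sup>2 \<le> D"
    using vD by (intro LIMSEQ_le[where X="\<lambda>n. (norm (f - v n))\<^sup>2"]) (auto intro: less_imp_le)
  show ?thesis
  proof (intro bexI[OF _ pV] ballI)
    fix w assume wV: "w \<in> V"
    define g where "g = f - p"
    define c where "c = cinner w g"
    define t where "t = 1 / ((norm w)\<^sup>2 + 1)"
    have nw: "(norm w)\<^sup>2 \<ge> 0" by simp
    have pos: "(norm w)\<^sup>2 + 1 > 0" using nw by linarith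
    have t1: "t > 0" unfolding t_def using pos by simp
    have "t * (norm w)\<^sup>2 = (norm w)\<^sup>2 / ((norm w)\<^sup>2 + 1)" unfolding t_def by simp
    also have "\<dots> < 1" using pos by (simp add: divide_less_eq)
    finally have t: "t > 0" "t * (norm w)\<^sup>2 < 1" using t1 by auto
    define s where "s = complex_of_real t * c"
    have inV: "p + scaleC s w \<in> V" using Vadd Vsc pV wV by blast
    have e0: "f - (p + scaleC s w) = g - scaleC s w" by (simp add: g_def)
    have le0: "(norm g)\<^sup>2 \<le> (norm (g - scaleC s w))\<^sup>2"
      using pmin Dle[OF inV] unfolding e0 g_def by linarith
    have e1: "(norm (g - scaleC s w))\<^sup>2 = (norm g)\<^sup>2 + (cmod s)\<^sup>2 * (norm w)\<^sup>2 - 2 * Re (s * cinner g w)"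
      by (simp add: norm_diff_sq norm_scaleC cinner_scaleC_right power_mult_distrib)
    have cg: "cinner g w = cnj c" unfolding c_def by (rule cinner_commute)
    have e2: "s * cinner g w = complex_of_real (t * (cmod c)\<^sup>2)"
    proof -
      have cc: "c * cnj c = complex_of_real ((cmod c)\<^sup>2)"
        by (metis complex_norm_square of_real_power)
      show ?thesis unfolding cg s_def by (simp add: mult.assoc cc)
    qed
    have e3: "(cmod s)\<^sup>2 = t\<^sup>2 * (cmod c)\<^sup>2" unfolding s_def using t
      by (simp add: norm_mult power_mult_distrib)
    define X where "X = (cmod c)\<^sup>2"
    have "0 \<le> t\<^sup>2 * X * (norm w)\<^sup>2 - 2 * (t * X)"
      using le0 unfolding e1 e2 e3 X_def by simp
    then have key: "0 \<le> (t * X) * (t * (norm w)\<^sup>2 - 2)"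
      by (simp add: algebra_simps power2_eq_square)
    have "X \<le> 0"
    proof (rule ccontr)
      assume "\<not> X \<le> 0"
      then have "t * X > 0" using t by simp
      moreover have "t * (norm w)\<^sup>2 - 2 < 0" using t by simp
      ultimately have "(t * X) * (t * (norm w)\<^sup>2 - 2) < 0" by (rule mult_pos_neg)
      then show False using key by simp
    qed
    then have "(cmod c)\<^sup>2 \<le> 0" unfolding X_def .
    then show "cinner w (f - p) = 0" unfolding c_def g_def by simp
  qed
qed

lemma tendsto_cinner_right:
  fixes x :: "nat \<Rightarrow> 'a::chilbert_space"
  assumes "x \<longlonglongrightarrow> a" shows "(\<lambda>n. cinner y (x n)) \<longlonglongrightarrow> cinner y a"
  using bounded_linear.tendsto[OF bounded_linear_cinner_right assms] .

lemma tendsto_cinner_left: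
  fixes x :: "nat \<Rightarrow> 'a::chilbert_space"
  assumes "x \<longlonglongrightarrow> a" shows "(\<lambda>n. cinner (x n) y) \<longlonglongrightarrow> cinner a y"
proof -
  have "(\<lambda>n. cnj (cinner y (x n))) \<longlonglongrightarrow> cnj (cinner y a)"
    by (intro tendsto_cnj tendsto_cinner_right assms)
  moreover have "(\<lambda>n. cinner (x n) y) = (\<lambda>n. cnj (cinner y (x n)))"
    by (rule ext, rule cinner_commute)
  moreover have "cinner a y = cnj (cinner y a)" by (rule cinner_commute)
  ultimately show ?thesis by simp
qed

lemma dense_orth:
  fixes d :: "'a::chilbert_space"
  assumes "closure D = UNIV" "\<forall>\<kappa>\<in>D. cinner d \<kappa> = 0"
  shows "d = 0"
proof -
  have cl: "closed {\<kappa>. cinner d \<kappa> = 0}"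
    by (intro closed_Collect_eq continuous_on_const
        linear_continuous_on bounded_linear_cinner_right)
  have "closure D \<subseteq> {\<kappa>. cinner d \<kappa> = 0}"
    using assms(2) by (intro closure_minimal cl) auto
  then have "cinner d d = 0" using assms(1) by auto
  then show ?thesis by (simp add: cinner_self_eq_0)
qed

locale sa =
  fixes D :: "'a::chilbert_space set" and H :: "'a \<Rightarrow> 'a"
  assumes sa: "self_adjoint_op D H"
begin

lemma D0: "0 \<in> D" and Dadd: "x \<in> D \<Longrightarrow> y \<in> D \<Longrightarrow> x + y \<in> D"
  and Dsc: "x \<in> D \<Longrightarrow> scaleC c x \<in> D"
  and Hadd: "x \<in> D \<Longrightarrow> y \<in> D \<Longrightarrow> H (x + y) = H x + H y"
  and Hsc: "x \<in> D \<Longrightarrow> H (scaleC c x) = scaleC c (H x)"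
  and dense: "closure D = UNIV" and adj: "adj_dom D H = D"
  and sym: "\<phi> \<in> D \<Longrightarrow> \<psi> \<in> D \<Longrightarrow> cinner \<phi> (H \<psi>) = cinner (H \<phi>) \<psi>"
  using sa unfolding self_adjoint_op_def clinear_op_def csubspace_def by auto

lemma Dminus: "x \<in> D \<Longrightarrow> - x \<in> D"
  using Dsc[of x "-1"] by (simp add: scaleC_minus1)

lemma Ddiff: "x \<in> D \<Longrightarrow> y \<in> D \<Longrightarrow> x - y \<in> D"
proof -
  assume "x \<in> D" "y \<in> D"
  then have "x + (- y) \<in> D" using Dadd Dminus by blast
  then show ?thesis by simp
qed

lemma Hminus: "x \<in> D \<Longrightarrow> H (- x) = - H x"
  using Hsc[of x "-1"] by (simp add: scaleC_minus1)

lemma Hdiff: "x \<in> D \<Longrightarrow> y \<in> D \<Longrightarrow> H (x - y) = H x - H y"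
proof -
  assume xy: "x \<in> D" "y \<in> D"
  have "H (x + (- y)) = H x + H (- y)" using Hadd[OF xy(1) Dminus[OF xy(2)]] .
  then show ?thesis using Hminus[OF xy(2)] by simp
qed

lemma H0: "H 0 = 0"
  using Hsc[OF D0, of 0] by simp

lemma Im_real: "\<psi> \<in> D \<Longrightarrow> Im (cinner (H \<psi>) \<psi>) = 0"
proof -
  assume a: "\<psi> \<in> D"
  have eq: "cinner (H \<psi>) \<psi> = cnj (cinner (H \<psi>) \<psi>)"
    using sym[OF a a] cinner_commute[of "H \<psi>" \<psi>] by simp
  have "Im (cinner (H \<psi>) \<psi>) = Im (cnj (cinner (H \<psi>) \<psi>))" by (rule arg_cong[OF eq])
  then have "Im (cinner (H \<psi>) \<psi>) = - Im (cinner (H \<psi>) \<psi>)" by simp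
  then show ?thesis by linarith
qed

lemma T_diff: "x \<in> D \<Longrightarrow> y \<in> D \<Longrightarrow>
   (H x - scaleC z x) - (H y - scaleC z y) = H (x - y) - scaleC z (x - y)"
  by (simp add: Hdiff scaleC_diff_right algebra_simps)

lemma norm_identity:
  assumes "\<psi> \<in> D"
  shows "(norm (H \<psi> - scaleC z \<psi>))\<^sup>2 = (norm (H \<psi> - scaleC (complex_of_real (Re z)) \<psi>))\<^sup>2
            + (Im z)\<^sup>2 * (norm \<psi>)\<^sup>2"
proof -
  define a where "a = H \<psi> - scaleC (complex_of_real (Re z)) \<psi>"
  define b where "b = \<i> * complex_of_real (Im z)"
  have zsplit: "z = complex_of_real (Re z) + b" unfolding b_def by (simp add: complex_eq_iff)
  have e: "H \<psi> - scaleC z \<psi> = a - scaleC b \<psi>"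
    unfolding a_def by (subst zsplit) (simp add: scaleC_add_left)
  have "Im (cinner a \<psi>) = 0"
    unfolding a_def using Im_real[OF assms]
    by (simp add: cinner_diff_left cinner_scaleC_left cinner_self_norm)
  then have "Re (cinner a (scaleC b \<psi>)) = 0"
    unfolding b_def by (simp add: cinner_scaleC_right)
  then show ?thesis
    unfolding e a_def[symmetric] by (simp add: norm_diff_sq norm_scaleC b_def norm_mult power_mult_distrib)
qed

lemma lower_bound:
  assumes "\<psi> \<in> D"
  shows "\<bar>Im z\<bar> * norm \<psi> \<le> norm (H \<psi> - scaleC z \<psi>)"
    and "norm (H \<psi> - scaleC (complex_of_real (Re z)) \<psi>) \<le> norm (H \<psi> - scaleC z \<psi>)"
proof -
  have "(\<bar>Im z\<bar> * norm \<psi>)\<^sup>2 \<le> (norm (H \<psi> - scaleC z \<psi>))\<^sup>2"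
    using norm_identity[OF assms, of z] by (simp add: power_mult_distrib)
  then show "\<bar>Im z\<bar> * norm \<psi> \<le> norm (H \<psi> - scaleC z \<psi>)"
    by (rule power2_le_imp_le) simp
  have "(norm (H \<psi> - scaleC (complex_of_real (Re z)) \<psi>))\<^sup>2 \<le> (norm (H \<psi> - scaleC z \<psi>))\<^sup>2"
    using norm_identity[OF assms, of z] by simp
  then show "norm (H \<psi> - scaleC (complex_of_real (Re z)) \<psi>) \<le> norm (H \<psi> - scaleC z \<psi>)"
    by (rule power2_le_imp_le) simp
qed

lemma inj_T:
  assumes "Im z \<noteq> 0"
  shows "inj_on (\<lambda>x. H x - scaleC z x) D"
proof (rule inj_onI)
  fix x y assume xy: "x \<in> D" "y \<in> D" "H x - scaleC z x = H y - scaleC z y"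
  then have "H (x - y) - scaleC z (x - y) = 0" using T_diff[of x y z] by simp
  then have "\<bar>Im z\<bar> * norm (x - y) \<le> 0" using lower_bound(1)[OF Ddiff[OF xy(1,2)], of z] by simp
  then show "x = y" using assms by (simp add: zero_less_mult_iff mult_le_0_iff)
qed

lemma closed_range:
  assumes z: "Im z \<noteq> 0"
  shows "closed ((\<lambda>x. H x - scaleC z x) ` D)"
proof (unfold closed_sequential_limits, intro allI impI, elim conjE)
  fix u l assume uV: "\<forall>n. u n \<in> (\<lambda>x. H x - scaleC z x) ` D" and ul: "u \<longlonglongrightarrow> l"
  have "\<forall>n. \<exists>x. x \<in> D \<and> u n = H x - scaleC z x" using uV by blast
  then obtain \<psi> where "\<forall>n. \<psi> n \<in> D \<and> u n = H (\<psi> n) - scaleC z (\<psi> n)"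
    using choice[of "\<lambda>n x. x \<in> D \<and> u n = H x - scaleC z x"] by blast
  then have \<psi>D: "\<And>n. \<psi> n \<in> D" and u\<psi>: "\<And>n. u n = H (\<psi> n) - scaleC z (\<psi> n)" by auto
  have y: "\<bar>Im z\<bar> > 0" using z by simp
  have bnd: "norm (\<psi> m - \<psi> n) \<le> norm (u m - u n) / \<bar>Im z\<bar>" for m n
  proof -
    have "\<bar>Im z\<bar> * norm (\<psi> m - \<psi> n) \<le> norm (u m - u n)"
      using lower_bound(1)[OF Ddiff[OF \<psi>D[of m] \<psi>D[of n]], of z] T_diff[OF \<psi>D[of m] \<psi>D[of n], of z] u\<psi>
      by simp
    then show ?thesis using y by (simp add: field_simps)
  qed
  have "Cauchy u" using ul by (rule LIMSEQ_imp_Cauchy)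
  have "Cauchy \<psi>"
  proof (rule metric_CauchyI)
    fix e :: real assume e: "e > 0"
    have "e * \<bar>Im z\<bar> > 0" using e y by simp
    then obtain M where M: "\<forall>m\<ge>M. \<forall>n\<ge>M. dist (u m) (u n) < e * \<bar>Im z\<bar>"
      using \<open>Cauchy u\<close> unfolding Cauchy_def by blast
    show "\<exists>M. \<forall>m\<ge>M. \<forall>n\<ge>M. dist (\<psi> m) (\<psi> n) < e"
    proof (intro exI allI impI)
      fix m n assume "M \<le> m" "M \<le> n"
      then have "norm (u m - u n) < e * \<bar>Im z\<bar>" using M by (simp add: dist_norm)
      then have "norm (u m - u n) / \<bar>Im z\<bar> < e" using y by (simp add: divide_less_eq)
      then show "dist (\<psi> m) (\<psi> n) < e" using bnd[of m n] by (simp add: dist_norm)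
    qed
  qed
  then obtain \<psi>0 where \<psi>lim: "\<psi> \<longlonglongrightarrow> \<psi>0" using Cauchy_convergent_iff convergent_def by blast
  define \<eta> where "\<eta> = l + scaleC z \<psi>0"
  have H\<psi>: "H (\<psi> n) = u n + scaleC z (\<psi> n)" for n using u\<psi>[of n] by simp
  have Hlim: "(\<lambda>n. H (\<psi> n)) \<longlonglongrightarrow> \<eta>"
    unfolding H\<psi> \<eta>_def
    by (intro tendsto_add ul bounded_linear.tendsto[OF bounded_linear_scaleC] \<psi>lim)
  have key: "cinner \<psi>0 (H \<kappa>) = cinner \<eta> \<kappa>" if "\<kappa> \<in> D" for \<kappa>
  proof -
    have "(\<lambda>n. cinner (\<psi> n) (H \<kappa>)) \<longlonglongrightarrow> cinner \<psi>0 (H \<kappa>)"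
      by (rule tendsto_cinner_left[OF \<psi>lim])
    moreover have "(\<lambda>n. cinner (\<psi> n) (H \<kappa>)) = (\<lambda>n. cinner (H (\<psi> n)) \<kappa>)"
      using sym[OF \<psi>D that] by simp
    moreover have "(\<lambda>n. cinner (H (\<psi> n)) \<kappa>) \<longlonglongrightarrow> cinner \<eta> \<kappa>"
      by (rule tendsto_cinner_left[OF Hlim])
    ultimately show ?thesis using LIMSEQ_unique by metis
  qed
  have "\<psi>0 \<in> adj_dom D H" unfolding adj_dom_def using key by blast
  then have \<psi>0D: "\<psi>0 \<in> D" using adj by simp
  have "\<forall>\<kappa>\<in>D. cinner (H \<psi>0 - \<eta>) \<kappa> = 0"
    using key sym[OF \<psi>0D] by (simp add: cinner_diff_left)
  then have "H \<psi>0 - \<eta> = 0" using dense_orth[OF dense] by blast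
  then have "l = H \<psi>0 - scaleC z \<psi>0" unfolding \<eta>_def by (simp add: algebra_simps)
  then show "l \<in> (\<lambda>x. H x - scaleC z x) ` D" using \<psi>0D by blast
qed

lemma surj_T:
  assumes z: "Im z \<noteq> 0"
  shows "(\<lambda>x. H x - scaleC z x) ` D = UNIV"
proof -
  let ?V = "(\<lambda>x. H x - scaleC z x) ` D"
  have V0: "0 \<in> ?V" using D0 H0 by (metis (no_types, lifting) diff_zero image_eqI scaleC_zero_right)
  have Vadd: "\<forall>x\<in>?V. \<forall>y\<in>?V. x + y \<in> ?V"
  proof (intro ballI)
    fix x y assume "x \<in> ?V" "y \<in> ?V"
    then obtain a b where ab: "a \<in> D" "b \<in> D" "x = H a - scaleC z a" "y = H b - scaleC z b" by blast
    then have "x + y = H (a + b) - scaleC z (a + b)" by (simp add: Hadd scaleC_add_right)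
    then show "x + y \<in> ?V" using Dadd[OF ab(1,2)] by blast
  qed
  have Vsc: "\<forall>c. \<forall>x\<in>?V. scaleC c x \<in> ?V"
  proof (intro allI ballI)
    fix c x assume "x \<in> ?V"
    then obtain a where a: "a \<in> D" "x = H a - scaleC z a" by blast
    then have "scaleC c x = H (scaleC c a) - scaleC z (scaleC c a)"
      by (simp add: Hsc scaleC_diff_right scaleC_scaleC mult.commute)
    then show "scaleC c x \<in> ?V" using Dsc[OF a(1)] by blast
  qed
  show ?thesis
  proof (rule set_eqI, rule iffI)
    fix f :: 'a
    obtain p where pV: "p \<in> ?V" and orth: "\<forall>v\<in>?V. cinner v (f - p) = 0"
      using projection[OF closed_range[OF z] V0 Vadd Vsc] by blast
    define g where "g = f - p"
    have g1: "cinner g (H \<psi>) = cinner (scaleC (cnj z) g) \<psi>" if "\<psi> \<in> D" for \<psi>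
    proof -
      have "cinner (H \<psi> - scaleC z \<psi>) g = 0" using orth that unfolding g_def by blast
      then have "cinner g (H \<psi> - scaleC z \<psi>) = 0" by (metis cinner_commute complex_cnj_zero)
      then show ?thesis by (simp add: cinner_diff_right cinner_scaleC_right cinner_scaleC_left)
    qed
    then have "g \<in> adj_dom D H" unfolding adj_dom_def by blast
    then have gD: "g \<in> D" using adj by simp
    have "cinner g (H g) = z * cinner g g" using g1[OF gD] by (simp add: cinner_scaleC_left)
    moreover have "cinner g (H g) = cnj (cinner g (H g))"
      using sym[OF gD gD] cinner_commute[of "H g" g] by simp
    ultimately have "z * cinner g g = cnj z * cinner g g"
      by (metis cinner_self_norm complex_cnj_complex_of_real complex_cnj_mult)
    then have "(z - cnj z) * cinner g g = 0" by (simp add: algebra_simps)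
    moreover have "z - cnj z \<noteq> 0" using z by (simp add: complex_eq_iff)
    ultimately have "g = 0" by (simp add: cinner_self_eq_0)
    then show "f \<in> ?V" using pV unfolding g_def by simp
  qed simp
qed

end

lemma holo_inner:
  fixes F :: "complex \<Rightarrow> 'a::chilbert_space"
  assumes "open S" and der: "\<And>\<theta>. \<theta> \<in> S \<Longrightarrow> \<exists>v. (F has_derivative (\<lambda>h. scaleC h v)) (at \<theta>)"
  shows "(\<lambda>z. cinner w (F z)) holomorphic_on S"
  unfolding holomorphic_on_open[OF \<open>open S\<close>]
proof
  fix \<theta> assume "\<theta> \<in> S"
  then obtain v where v: "(F has_derivative (\<lambda>h. scaleC h v)) (at \<theta>)" using der by blast
  have "((\<lambda>z. cinner w (F z)) has_derivative (\<lambda>h. cinner w (scaleC h v))) (at \<theta>)"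
    by (rule bounded_linear.has_derivative[OF bounded_linear_cinner_right v])
  moreover have "(\<lambda>h. cinner w (scaleC h v)) = (\<lambda>h. cinner w v * h)"
    by (rule ext) (simp add: cinner_scaleC_right mult.commute)
  ultimately have "((\<lambda>z. cinner w (F z)) has_field_derivative cinner w v) (at \<theta>)"
    by (simp add: has_field_derivative_def)
  then show "\<exists>f'. ((\<lambda>z. cinner w (F z)) has_field_derivative f') (at \<theta>)" by blast
qed

lemma cauchy_est:
  fixes F :: "complex \<Rightarrow> 'a::chilbert_space"
  assumes hol: "\<And>w. (\<lambda>z. cinner w (F z)) holomorphic_on ball 0 R"
    and bnd: "\<And>z. z \<in> ball 0 R \<Longrightarrow> norm (F z) \<le> B"
    and R: "R > 0" and th: "cmod \<theta> < R / 3"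
  shows "norm (F \<theta> - F 0) \<le> (8/5) * B / R * cmod \<theta>"
proof -
  define w where "w = F \<theta> - F 0"
  define g where "g = (\<lambda>z. cinner w (F z))"
  define r where "r = 5 * R / 8"
  have r: "r > 0" unfolding r_def using R by simp
  have B0: "B \<ge> 0" using bnd[of 0] R by (smt (verit) centre_in_ball norm_ge_zero)
  let ?S = "closed_segment 0 \<theta>"
  have Ssub: "cmod u \<le> cmod \<theta>" if "u \<in> ?S" for u
    using segment_bound1[OF that] by simp
  have cb: "cball u r \<subseteq> ball 0 R" if "u \<in> ?S" for u
  proof
    fix x assume "x \<in> cball u r"
    then have "cmod (x - u) \<le> r" by (simp add: dist_norm norm_minus_commute)
    moreover have "cmod x \<le> cmod u + cmod (x - u)" by (metis norm_triangle_sub add.commute)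
    ultimately have "cmod x \<le> cmod \<theta> + r" using Ssub[OF that] by linarith
    also have "\<dots> < R" using th R unfolding r_def by linarith
    finally show "x \<in> ball 0 R" by simp
  qed
  have holg: "g holomorphic_on ball 0 R" unfolding g_def by (rule hol)
  have gbnd: "norm (g z) \<le> norm w * B" if "z \<in> ball 0 R" for z
  proof -
    have "norm (g z) \<le> norm w * norm (F z)" unfolding g_def by (rule cauchy_schwarz)
    also have "\<dots> \<le> norm w * B" using bnd[OF that] by (simp add: mult_left_mono)
    finally show ?thesis .
  qed
  have dbnd: "norm (deriv g u) \<le> norm w * B / r" if "u \<in> ?S" for u
  proof -
    have "norm ((deriv ^^ 1) g u) \<le> fact 1 * (norm w * B) / r ^ 1"
    proof (rule Cauchy_inequality)
      show "g holomorphic_on ball u r"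
        using holg cb[OF that] ball_subset_cball by (meson holomorphic_on_subset subset_trans)
      show "continuous_on (cball u r) g"
        using holomorphic_on_imp_continuous_on[OF holg] cb[OF that] by (rule continuous_on_subset)
      show "0 < r" by (rule r)
      show "norm (g x) \<le> norm w * B" if "norm (u - x) = r" for x
        using that cb[OF \<open>u \<in> ?S\<close>] gbnd by (simp add: dist_norm subset_iff)
    qed
    then show ?thesis by simp
  qed
  have dg: "(g has_field_derivative deriv g u) (at u within ?S)" if "u \<in> ?S" for u
  proof -
    have "u \<in> cball u r" using r by simp
    then have "u \<in> ball 0 R" using cb[OF that] by blast
    then have "g field_differentiable at u"
      using holg by (meson holomorphic_on_imp_differentiable_at open_ball)
    then show ?thesis
      by (simp add: DERIV_deriv_iff_field_differentiable[symmetric] has_field_derivative_at_within)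
  qed
  have "norm (g \<theta> - g 0) \<le> norm w * B / r * norm (\<theta> - 0)"
    by (rule field_differentiable_bound[OF convex_closed_segment dg dbnd]) auto
  moreover have "g \<theta> - g 0 = complex_of_real ((norm w)\<^sup>2)"
    unfolding g_def w_def by (simp add: cinner_diff_right[symmetric] cinner_self_norm)
  ultimately have "(norm w)\<^sup>2 \<le> norm w * (B / r * cmod \<theta>)"
    by (simp add: mult.assoc norm_power del: of_real_power)
  then have "norm w \<le> B / r * cmod \<theta>"
  proof (cases "norm w = 0")
    case True
    have "0 \<le> B / r * cmod \<theta>" using B0 r by simp
    then show ?thesis using True by simp
  next
    case False
    then have nw: "norm w > 0" by simp
    assume "(norm w)\<^sup>2 \<le> norm w * (B / r * cmod \<theta>)"
    then have "norm w * norm w \<le> norm w * (B / r * cmod \<theta>)" by (simp add: power2_eq_square)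
    then show ?thesis using mult_le_cancel_left_pos[OF nw, of "norm w" "B / r * cmod \<theta>"] by blast
  qed
  also have "B / r = (8/5) * B / R" unfolding r_def by simp
  finally show ?thesis unfolding w_def .
qed

theorem mainTheorem5:
  fixes DH DA :: "'h::chilbert_space set"
    and H A :: "'h \<Rightarrow> 'h"
    and U :: "real \<Rightarrow> 'h \<Rightarrow> 'h"
    and Hth :: "complex \<Rightarrow> 'h \<Rightarrow> 'h"
    and R M C :: real
  assumes separable: "\<exists>S::'h set. countable S \<and> closure S = UNIV"
    and H_sa: "self_adjoint_op DH H"
    and A_sa: "self_adjoint_op DA A"
    and U_def: "unitary_group_of U DA A"
    and G1a: "\<forall>t. U t ` DH \<subseteq> DH"
    and G1b: "\<forall>\<psi>\<in>DH. \<exists>K. \<forall>t. \<bar>t\<bar> \<le> 1 \<longrightarrow> norm (H (U t \<psi>)) \<le> K"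
    and G2: "\<forall>\<psi>0\<in>DH \<inter> DA. \<forall>\<phi>0\<in>DH \<inter> DA. \<forall>\<epsilon>>0. \<exists>\<delta>>0. \<forall>\<psi>\<in>DH \<inter> DA. \<forall>\<phi>\<in>DH \<inter> DA.
               (norm (H (\<psi> - \<psi>0)) + norm (\<psi> - \<psi>0)) + (norm (H (\<phi> - \<phi>0)) + norm (\<phi> - \<phi>0)) < \<delta> \<longrightarrow>
               cmod ((cinner (H \<psi>) (A \<phi>) - cinner (A \<psi>) (H \<phi>))
                     - (cinner (H \<psi>0) (A \<phi>0) - cinner (A \<psi>0) (H \<phi>0))) < \<epsilon>"
    and R_pos: "R > 0"
    and G3_real: "\<forall>\<psi>\<in>DH. \<forall>t::real. Hth (complex_of_real t) \<psi> = U t (H (U (- t) \<psi>))"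
    and G3_analytic: "\<forall>\<psi>\<in>DH. \<forall>\<theta>. \<bar>Im \<theta>\<bar> < R \<longrightarrow>
               (\<exists>v. ((\<lambda>z. Hth z \<psi>) has_derivative (\<lambda>h. scaleC h v)) (at \<theta>))"
    and G4: "\<exists>K. \<forall>\<theta>. cmod \<theta> < R \<longrightarrow>
               (\<forall>\<phi>. norm (Hth \<theta> (cresolvent DH H (- \<i>) \<phi>)) \<le> K * norm \<phi>)"
    and M_def: "M = Sup {onorm (\<lambda>\<phi>. Hth \<theta> (cresolvent DH H (- \<i>) \<phi>)) | \<theta>. cmod \<theta> < R}"
    and C_def: "C = max 1 M / R"
  shows "\<forall>\<theta>. cmod \<theta> < 1 / (3 * C) \<longrightarrow>
           cspectrum DH (Hth \<theta>) \<subseteq> {z. \<bar>Im z\<bar> \<le> 4 * C * cmod \<theta> * (\<bar>Re z\<bar> + 1)}"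
proof -
  interpret sa DH H by (rule sa.intro[OF H_sa])
  have U0: "U 0 = id" and Uadd: "\<And>t a b. U t (a + b) = U t a + U t b"
    using U_def unfolding unitary_group_of_def clinear_op_def by auto
  have Hth0: "Hth 0 \<psi> = H \<psi>" if "\<psi> \<in> DH" for \<psi>
    using G3_real that U0 by (metis of_real_0 minus_zero id_apply)
  have hol: "(\<lambda>z. cinner w (Hth z \<psi>)) holomorphic_on ball 0 R" if "\<psi> \<in> DH" for w \<psi>
  proof (rule holo_inner[OF open_ball])
    fix \<theta> :: complex assume "\<theta> \<in> ball 0 R"
    then have "\<bar>Im \<theta>\<bar> < R" using abs_Im_le_cmod[of \<theta>] by simp
    then show "\<exists>v. ((\<lambda>z. Hth z \<psi>) has_derivative (\<lambda>h. scaleC h v)) (at \<theta>)"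
      using G3_analytic that by blast
  qed
  have Hth_add: "Hth \<theta> (a + b) = Hth \<theta> a + Hth \<theta> b"
    if ab: "a \<in> DH" "b \<in> DH" and th: "cmod \<theta> < R" for \<theta> a b
  proof -
    define d where "d = Hth \<theta> (a + b) - Hth \<theta> a - Hth \<theta> b"
    define h where "h = (\<lambda>z. cinner d (Hth z (a + b)) - cinner d (Hth z a) - cinner d (Hth z b))"
    have hh: "h holomorphic_on ball 0 R"
      unfolding h_def using hol Dadd[OF ab] ab by (intro holomorphic_intros) auto
    have real0: "h (complex_of_real t) = 0" for t
    proof -
      have "U (- t) a \<in> DH" "U (- t) b \<in> DH" using G1a ab by auto
      then have "Hth (complex_of_real t) (a + b) = Hth (complex_of_real t) a + Hth (complex_of_real t) b"
        using G3_real ab Dadd[OF ab] by (simp add: Uadd Hadd)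
      then show ?thesis unfolding h_def by (simp add: cinner_add_right)
    qed
    have lim: "0 islimpt (complex_of_real ` {t. \<bar>t\<bar> < R})"
      unfolding islimpt_approachable
    proof (intro allI impI)
      fix e :: real assume e: "e > 0"
      define t where "t = min e R / 2"
      have t: "t > 0" "t < e" "t < R" unfolding t_def using e R_pos by auto
      show "\<exists>x'\<in>complex_of_real ` {t. \<bar>t\<bar> < R}. x' \<noteq> 0 \<and> dist x' 0 < e"
        using t by (intro bexI[of _ "complex_of_real t"]) (auto simp: dist_norm)
    qed
    have "h \<theta> = 0"
    proof (rule analytic_continuation[OF hh open_ball connected_ball _ _ lim])
      show "complex_of_real ` {t. \<bar>t\<bar> < R} \<subseteq> ball 0 R" by auto
      show "0 \<in> ball 0 R" using R_pos by simp
      show "\<And>z. z \<in> complex_of_real ` {t. \<bar>t\<bar> < R} \<Longrightarrow> h z = 0" using real0 by auto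
      show "\<theta> \<in> ball 0 R" using th by simp
    qed
    then have "cinner d d = 0" unfolding h_def d_def by (simp add: cinner_diff_right)
    then show ?thesis unfolding d_def by (simp add: cinner_self_eq_0 algebra_simps)
  qed
  have Hth_diff: "Hth \<theta> (a - b) = Hth \<theta> a - Hth \<theta> b"
    if ab: "a \<in> DH" "b \<in> DH" and th: "cmod \<theta> < R" for \<theta> a b
    using Hth_add[OF Ddiff[OF ab] ab(2) th] by simp
  define res where "res = cresolvent DH H (- \<i>)"
  have res: "res (H \<psi> - scaleC (- \<i>) \<psi>) = \<psi>" if "\<psi> \<in> DH" for \<psi>
  proof -
    have "inj_on (\<lambda>x. H x - scaleC (- \<i>) x) DH" by (rule inj_T) simp
    then show ?thesis unfolding res_def cresolvent_def using that
      by (intro the_equality) (auto dest: inj_onD)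
  qed
  obtain K where K: "\<And>\<theta> \<phi>. cmod \<theta> < R \<Longrightarrow> norm (Hth \<theta> (res \<phi>)) \<le> K * norm \<phi>"
    using G4 unfolding res_def by blast
  define K' where "K' = max K 0"
  have ratio: "norm (Hth \<theta> (res \<phi>)) / norm \<phi> \<le> K'" if th: "cmod \<theta> < R" for \<theta> \<phi>
  proof (cases "\<phi> = 0")
    case True then show ?thesis unfolding K'_def by simp
  next
    case False
    then have "norm (Hth \<theta> (res \<phi>)) / norm \<phi> \<le> K" using K[OF th, of \<phi>] by (simp add: divide_le_eq)
    then show ?thesis unfolding K'_def by simp
  qed
  have onb: "onorm (\<lambda>\<phi>. Hth \<theta> (res \<phi>)) \<le> K'" if "cmod \<theta> < R" for \<theta>
    unfolding onorm_def by (rule cSUP_least) (auto intro: ratio[OF that])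
  define M1 where "M1 = max 1 M"
  have Mbound: "norm (Hth \<theta> (res \<phi>)) \<le> M1 * norm \<phi>" if th: "cmod \<theta> < R" for \<theta> \<phi>
  proof (cases "\<phi> = 0")
    case True then show ?thesis using K[OF th, of \<phi>] by simp
  next
    case False
    have bdd: "bdd_above (range (\<lambda>\<phi>. norm (Hth \<theta> (res \<phi>)) / norm \<phi>))"
    proof (rule bdd_aboveI2)
      fix \<phi>' show "norm (Hth \<theta> (res \<phi>')) / norm \<phi>' \<le> K'"
        by (rule ratio[OF th])
    qed
    have "norm (Hth \<theta> (res \<phi>)) / norm \<phi> \<le> onorm (\<lambda>\<phi>. Hth \<theta> (res \<phi>))"
      unfolding onorm_def by (rule cSUP_upper[OF UNIV_I bdd])
    also have "\<dots> \<le> M"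
    proof -
      have "bdd_above {onorm (\<lambda>\<phi>. Hth \<theta> (res \<phi>)) | \<theta>. cmod \<theta> < R}"
        using onb by (intro bdd_aboveI[of _ K']) auto
      then show ?thesis unfolding M_def res_def using th by (intro cSup_upper) auto
    qed
    also have "\<dots> \<le> M1" unfolding M1_def by simp
    finally show ?thesis using False by (simp add: divide_le_eq)
  qed
  have M1pos: "M1 \<ge> 1" unfolding M1_def by simp
  have CM: "C = M1 / R" unfolding C_def M1_def ..
  have Cpos: "C > 0" unfolding CM using M1pos R_pos by simp
  have rel: "norm (Hth \<theta> \<psi> - H \<psi>) \<le> (8/5) * C * cmod \<theta> * norm (H \<psi> - scaleC (- \<i>) \<psi>)"
    if \<psi>: "\<psi> \<in> DH" and th: "cmod \<theta> < R / 3" for \<theta> \<psi>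
  proof -
    define N where "N = norm (H \<psi> - scaleC (- \<i>) \<psi>)"
    have "norm (Hth \<theta> \<psi> - Hth 0 \<psi>) \<le> (8/5) * (M1 * N) / R * cmod \<theta>"
    proof (rule cauchy_est[OF hol[OF \<psi>] _ R_pos th])
      fix z :: complex assume "z \<in> ball 0 R"
      then have "cmod z < R" by simp
      from Mbound[OF this, of "H \<psi> - scaleC (- \<i>) \<psi>"] show "norm (Hth z \<psi>) \<le> M1 * N"
        unfolding res[OF \<psi>] N_def .
    qed
    also have "(8/5) * (M1 * N) / R * cmod \<theta> = (8/5) * C * cmod \<theta> * N"
      unfolding CM by (simp add: field_simps)
    finally show ?thesis unfolding Hth0[OF \<psi>] N_def .
  qed
  show ?thesis
  proof (intro allI impI subsetI)
    fix \<theta> z assume th: "cmod \<theta> < 1 / (3 * C)" and zs: "z \<in> cspectrum DH (Hth \<theta>)"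
    show "z \<in> {z. \<bar>Im z\<bar> \<le> 4 * C * cmod \<theta> * (\<bar>Re z\<bar> + 1)}"
    proof (rule ccontr)
      assume "z \<notin> {z. \<bar>Im z\<bar> \<le> 4 * C * cmod \<theta> * (\<bar>Re z\<bar> + 1)}"
      then have big: "4 * C * cmod \<theta> * (\<bar>Re z\<bar> + 1) < \<bar>Im z\<bar>" by simp
      have C3: "C * cmod \<theta> < 1 / 3"
        using th Cpos by (simp add: field_simps)
      have thR: "cmod \<theta> < R / 3"
      proof -
        have "1 / (3 * C) = R / (3 * M1)" unfolding CM using R_pos by simp
        also have "\<dots> \<le> R / 3" using M1pos R_pos by (intro divide_left_mono) auto
        finally show ?thesis using th by linarith
      qed
      have thR': "cmod \<theta> < R" using thR R_pos by linarith
      have y0: "\<bar>Im z\<bar> > 0"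
      proof -
        have "0 \<le> 4 * C * cmod \<theta> * (\<bar>Re z\<bar> + 1)" using Cpos by simp
        then show ?thesis using big by linarith
      qed
      have z0: "Im z \<noteq> 0" using y0 by simp
      define B where "B = (\<lambda>\<psi>. Hth \<theta> \<psi> - H \<psi>)"
      define S0 where "S0 = (\<lambda>\<psi>. H \<psi> - scaleC z \<psi>)"
      define T where "T = (\<lambda>\<psi>. Hth \<theta> \<psi> - scaleC z \<psi>)"
      have TSB: "T \<psi> = S0 \<psi> + B \<psi>" for \<psi> unfolding T_def S0_def B_def by simp
      define \<epsilon> where "\<epsilon> = (8/5) * C * cmod \<theta>"
      have eps0: "\<epsilon> \<ge> 0" unfolding \<epsilon>_def using Cpos by simp
      have eps1: "\<epsilon> \<le> 8/15" unfolding \<epsilon>_def using C3 by simp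
      have eps2: "\<epsilon> * (\<bar>Re z\<bar> + 1) \<le> (2/5) * \<bar>Im z\<bar>" unfolding \<epsilon>_def using big by simp
      have Bb: "norm (B \<psi>) \<le> (14/15) * norm (S0 \<psi>)" if \<psi>: "\<psi> \<in> DH" for \<psi>
      proof -
        define u where "u = norm (S0 \<psi>)"
        define n where "n = norm \<psi>"
        define N where "N = norm (H \<psi> - scaleC (- \<i>) \<psi>)"
        define x where "x = Re z"
        have 1: "norm (B \<psi>) \<le> \<epsilon> * N" unfolding B_def \<epsilon>_def N_def by (rule rel[OF \<psi> thR])
        have 2: "N \<le> norm (H \<psi>) + n"
          unfolding N_def n_def using norm_triangle_ineq4[of "H \<psi>" "scaleC (- \<i>) \<psi>"]
          by (simp add: norm_scaleC)
        have 3: "norm (H \<psi>) \<le> norm (H \<psi> - scaleC (complex_of_real x) \<psi>) + \<bar>x\<bar> * n"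
        proof -
          have "H \<psi> = (H \<psi> - scaleC (complex_of_real x) \<psi>) + scaleC (complex_of_real x) \<psi>" by simp
          then have "norm (H \<psi>) \<le> norm (H \<psi> - scaleC (complex_of_real x) \<psi>) + norm (scaleC (complex_of_real x) \<psi>)"
            by (metis norm_triangle_ineq)
          then show ?thesis unfolding n_def by (simp add: norm_scaleC)
        qed
        have 4: "norm (H \<psi> - scaleC (complex_of_real x) \<psi>) \<le> u"
          unfolding u_def S0_def x_def by (rule lower_bound(2)[OF \<psi>])
        have 5: "\<bar>Im z\<bar> * n \<le> u" unfolding u_def S0_def n_def by (rule lower_bound(1)[OF \<psi>])
        have n0: "n \<ge> 0" "u \<ge> 0" unfolding n_def u_def by simp_all
        have "N \<le> u + (\<bar>x\<bar> + 1) * n" using 2 3 4 by (simp add: algebra_simps)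
        then have "\<epsilon> * N \<le> \<epsilon> * (u + (\<bar>x\<bar> + 1) * n)" using eps0 by (rule mult_left_mono)
        also have "\<dots> = \<epsilon> * u + (\<epsilon> * (\<bar>x\<bar> + 1)) * n" by (simp add: algebra_simps)
        also have "\<dots> \<le> (8/15) * u + ((2/5) * \<bar>Im z\<bar>) * n"
          using mult_right_mono[OF eps1 n0(2)] mult_right_mono[OF eps2[folded x_def] n0(1)] by linarith
        also have "\<dots> \<le> (8/15) * u + (2/5) * u" using 5 by (simp add: mult.commute)
        finally show ?thesis using 1 unfolding u_def by simp
      qed
      have Bdiff: "B a - B b = B (a - b)" if "a \<in> DH" "b \<in> DH" for a b
        unfolding B_def using Hth_diff[OF that thR'] Hdiff[OF that] by simp
      have Sdiff: "S0 a - S0 b = S0 (a - b)" if "a \<in> DH" "b \<in> DH" for a b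
        unfolding S0_def using T_diff[OF that] by simp
      have Tdiff: "T a - T b = T (a - b)" if "a \<in> DH" "b \<in> DH" for a b
        using Bdiff[OF that] Sdiff[OF that] unfolding TSB by (simp add: algebra_simps)
      have lowT: "\<bar>Im z\<bar> * norm \<psi> \<le> 15 * norm (T \<psi>)" if \<psi>: "\<psi> \<in> DH" for \<psi>
      proof -
        have "norm (S0 \<psi>) - norm (B \<psi>) \<le> norm (T \<psi>)"
          unfolding TSB using norm_diff_ineq[of "S0 \<psi>" "B \<psi>"] by simp
        then have "norm (S0 \<psi>) \<le> 15 * norm (T \<psi>)" using Bb[OF \<psi>] by linarith
        moreover have "\<bar>Im z\<bar> * norm \<psi> \<le> norm (S0 \<psi>)" unfolding S0_def by (rule lower_bound(1)[OF \<psi>])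
        ultimately show ?thesis by linarith
      qed
      have bound: "\<forall>\<psi>\<in>DH. norm \<psi> \<le> (15 / \<bar>Im z\<bar>) * norm (T \<psi>)"
        using lowT y0 by (simp add: field_simps)
      have injT: "inj_on T DH"
      proof (rule inj_onI)
        fix a b assume ab: "a \<in> DH" "b \<in> DH" "T a = T b"
        then have "T (a - b) = 0" using Tdiff[OF ab(1,2)] by simp
        then have "\<bar>Im z\<bar> * norm (a - b) \<le> 0" using lowT[OF Ddiff[OF ab(1,2)]] by simp
        then show "a = b" using y0 by (simp add: mult_le_0_iff)
      qed
      have surjT: "T ` DH = UNIV"
      proof (rule set_eqI, rule iffI)
        fix f :: 'h
        have S0inj: "inj_on S0 DH" unfolding S0_def by (rule inj_T[OF z0])
        have S0surj: "S0 ` DH = UNIV" unfolding S0_def by (rule surj_T[OF z0])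
        define Si where "Si = inv_into DH S0"
        have SiD: "Si v \<in> DH" for v unfolding Si_def using S0surj by (metis inv_into_into UNIV_I)
        have SSi: "S0 (Si v) = v" for v unfolding Si_def using S0surj by (metis f_inv_into_f UNIV_I)
        define \<Phi> where "\<Phi> = (\<lambda>v. f - B (Si v))"
        have contr: "\<forall>a b. dist (\<Phi> a) (\<Phi> b) \<le> (14/15) * dist a b"
        proof (intro allI)
          fix a b
          have "dist (\<Phi> a) (\<Phi> b) = norm (B (Si b) - B (Si a))" unfolding \<Phi>_def dist_norm by simp
          also have "\<dots> = norm (B (Si b - Si a))" using Bdiff[OF SiD SiD] by simp
          also have "\<dots> \<le> (14/15) * norm (S0 (Si b - Si a))" by (rule Bb[OF Ddiff[OF SiD SiD]])
          also have "S0 (Si b - Si a) = b - a" using Sdiff[OF SiD SiD, of b a] SSi by simp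
          finally show "dist (\<Phi> a) (\<Phi> b) \<le> (14/15) * dist a b" by (simp add: dist_norm norm_minus_commute)
        qed
        obtain v where v: "\<Phi> v = v" using banach_fix_type[of "14/15" \<Phi>] contr by auto
        have "T (Si v) = f" unfolding TSB SSi using v unfolding \<Phi>_def by (simp add: algebra_simps)
        then show "f \<in> T ` DH" using SiD by blast
      qed simp
      have "bij_betw T DH UNIV" unfolding bij_betw_def using injT surjT by blast
      then have "z \<notin> cspectrum DH (Hth \<theta>)"
        unfolding cspectrum_def using bound unfolding T_def by blast
      then show False using zs by contradiction
    qed
  qed
qed

end
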